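(* Let $g\ge 1$, let $n\in\mathbb{Z}\setminus\{0\}$, and let $u_1,\dots,u_{2g+1}$ be pairwise distinct complex numbers, regarded as varying in a small open set. Consider the hyperelliptic curve $v^2=(u-u_1)\cdots(u-u_{2g+1})$. Let $\gamma$ be a closed cycle on this curve that avoids the branch points and the point at infinity, transported continuously as the $u_j$ vary. Define $$a_i=\oint_\gamma \frac{v^n\,du}{u-u_i},\qquad i=1,\dots,2g+1,$$ as functions of $(u_1,\dots,u_{2g+1})$. Then $$\frac{\partial a_i}{\partial u_j}=\frac{n}{2}\,\frac{a_i-a_j}{u_j-u_i}\quad\text{for all } i\neq j,\qquad\text{and}\qquad \sum_{i=1}^{2g+1}a_i=0.$$
   Context: The system in the conclusion is the upper triangular reduction of the rank two Schlesinger system. In this reduction all residue matrices have eigenvalues $\pm n/4$: $A^{(i)}=\begin{pmatrix} n/4 & a_i\\ 0 & -n/4\end{pmatrix}$. *)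

theory Defs
  imports "HOL-Analysis.Analysis"
begin

text \<open>Branch points are the coordinates of a vector u of type complex^'n
  (with CARD('n) = 2g+1).  The hyperelliptic curve is v^2 = branch_poly u z.\<close>

definition branch_poly :: "complex ^ 'n \<Rightarrow> complex \<Rightarrow> complex" where
  "branch_poly u z = (\<Prod>k\<in>UNIV. z - u $ k)"

definition vec_upd :: "complex ^ 'n \<Rightarrow> 'n \<Rightarrow> complex \<Rightarrow> complex ^ 'n" where
  "vec_upd u j w = (\<chi> k. if k = j then w else u $ k)"

text \<open>The cycle on the curve is given by its projection gamma (a closed path in the
  u-plane) together with a continuous lift V u t of v, i.e. (V u t)^2 = branch_poly u (gamma t).\<close>
definition period_integral ::
  "(real \<Rightarrow> complex) \<Rightarrow> (complex ^ 'n \<Rightarrow> real \<Rightarrow> complex) \<Rightarrow> int \<Rightarrow> 'n \<Rightarrow> complex ^ 'n \<Rightarrow> complex" where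
  "period_integral \<gamma> V n i u =
     integral {0..1} (\<lambda>t. (V u t) powi n * vector_derivative \<gamma> (at t) / (\<gamma> t - u $ i))"

end

theory Submission
  imports Defs "HOL-Complex_Analysis.Cauchy_Integral_Theorem"
begin

lemma sq_eq_connected:
  fixes a b :: "'a::topological_space \<Rightarrow> complex"
  assumes X: "connected X" and ca: "continuous_on X a" and cb: "continuous_on X b"
    and sq: "\<And>x. x\<in>X \<Longrightarrow> (a x)^2 = (b x)^2" and nz: "\<And>x. x\<in>X \<Longrightarrow> b x \<noteq> 0"
    and x0: "x0 \<in> X" "a x0 = b x0"
  shows "\<And>x. x\<in>X \<Longrightarrow> a x = b x"
proof -
  define c where "c = (\<lambda>x. a x / b x)"
  have cc: "continuous_on X c" unfolding c_def using ca cb nz by (intro continuous_on_divide) auto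
  have c1: "c x = 1 \<or> c x = -1" if "x \<in> X" for x
  proof -
    have "(c x)^2 = 1" using sq[OF that] nz[OF that] by (simp add: c_def power_divide)
    then show ?thesis using power2_eq_1_iff by blast
  qed
  have "c constant_on X"
  proof (rule continuous_discrete_range_constant[OF X cc])
    fix x assume "x \<in> X"
    show "\<exists>e>0. \<forall>y. y \<in> X \<and> c y \<noteq> c x \<longrightarrow> e \<le> norm (c y - c x)"
    proof (intro exI[of _ 1] conjI allI impI)
      fix y assume "y \<in> X \<and> c y \<noteq> c x"
      then show "1 \<le> norm (c y - c x)" using c1[of x] c1[of y] \<open>x \<in> X\<close> by auto
    qed simp
  qed
  then obtain k where k: "\<And>x. x \<in> X \<Longrightarrow> c x = k" by (auto simp: constant_on_def)
  have "k = 1" using k[OF x0(1)] x0(2) nz[OF x0(1)] by (simp add: c_def)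
  then show "\<And>x. x\<in>X \<Longrightarrow> a x = b x" using k nz by (simp add: c_def field_simps)
qed

lemma Re_pos_not_nonpos: "0 < Re z \<Longrightarrow> z \<notin> \<real>\<^sub>\<le>\<^sub>0"
  by (simp add: complex_nonpos_Reals_iff)

lemma near1_Re_pos: "norm (z - 1) < 1 \<Longrightarrow> 0 < Re (z::complex)"
  using abs_Re_le_cmod[of "z - 1"] by auto

lemma local_sqrt:
  fixes P :: "complex \<Rightarrow> complex"
  assumes hP: "P holomorphic_on A" and A: "open A" "z0 \<in> A" and P0: "P z0 \<noteq> 0" and s0: "s0^2 = P z0"
  obtains r where "r > 0" "ball z0 r \<subseteq> A"
    "(\<lambda>z. s0 * csqrt (P z / P z0)) holomorphic_on ball z0 r"
    "\<And>z. z \<in> ball z0 r \<Longrightarrow> (s0 * csqrt (P z / P z0))^2 = P z \<and> s0 * csqrt (P z / P z0) \<noteq> 0"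
proof -
  obtain r1 where r1: "r1 > 0" "ball z0 r1 \<subseteq> A" using A open_contains_ball by blast
  have "continuous (at z0) P"
    using hP A holomorphic_on_imp_continuous_on continuous_on_eq_continuous_at by blast
  then obtain r2 where r2: "r2 > 0" "\<And>z. dist z z0 < r2 \<Longrightarrow> dist (P z) (P z0) < norm (P z0)"
    unfolding continuous_at_eps_delta using P0 by (metis zero_less_norm_iff)
  define r where "r = min r1 r2"
  have near: "norm (P z / P z0 - 1) < 1" if "z \<in> ball z0 r" for z
  proof -
    have "dist (P z) (P z0) < norm (P z0)" using r2(2)[of z] that by (auto simp: r_def dist_commute)
    then have "norm (P z - P z0) / norm (P z0) < 1" using P0 by (simp add: dist_norm field_simps)
    moreover have "P z / P z0 - 1 = (P z - P z0) / P z0" using P0 by (simp add: field_simps)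
    ultimately show ?thesis by (simp add: norm_divide)
  qed
  have Rpos: "0 < Re (P z / P z0)" if "z \<in> ball z0 r" for z using near[OF that] near1_Re_pos by blast
  show ?thesis
  proof
    show "r > 0" using r1 r2 by (simp add: r_def)
    show "ball z0 r \<subseteq> A" using r1 by (auto simp: r_def)
    then have "(\<lambda>z. P z / P z0) holomorphic_on ball z0 r"
      using hP by (intro holomorphic_intros) (auto intro: holomorphic_on_subset)
    then have "(csqrt \<circ> (\<lambda>z. P z / P z0)) holomorphic_on ball z0 r"
      by (rule holomorphic_on_compose_gen[OF _ holomorphic_on_csqrt])
         (use Rpos Re_pos_not_nonpos in auto)
    then show "(\<lambda>z. s0 * csqrt (P z / P z0)) holomorphic_on ball z0 r"
      by (intro holomorphic_on_mult[OF holomorphic_on_const]) (simp add: o_def)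
    fix z assume z: "z \<in> ball z0 r"
    have "(s0 * csqrt (P z / P z0))^2 = s0^2 * (P z / P z0)" by (simp add: power_mult_distrib)
    also have "\<dots> = P z" using s0 P0 by simp
    finally show "(s0 * csqrt (P z / P z0))^2 = P z \<and> s0 * csqrt (P z / P z0) \<noteq> 0"
      using Rpos[OF z] s0 P0 by auto
  qed
qed


lemma path_bound:
  fixes \<gamma> K :: "real \<Rightarrow> complex" and \<Omega> :: "complex set"
  assumes vp: "valid_path \<gamma>" and \<Omega>: "open \<Omega>"
    and loc: "\<And>t0. t0 \<in> {0..1} \<Longrightarrow> \<exists>r>0. \<exists>\<psi>. \<psi> holomorphic_on ball (\<gamma> t0) r \<and> ball (\<gamma> t0) r \<subseteq> \<Omega> \<and>
        (\<exists>\<delta>>0. \<forall>t\<in>{0..1}. dist t t0 < \<delta> \<longrightarrow> \<gamma> t \<in> ball (\<gamma> t0) (r/2) \<and> K t = \<psi> (\<gamma> t))"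
  obtains L where
    "\<And>f. f holomorphic_on \<Omega> \<Longrightarrow> (\<lambda>t. f (\<gamma> t) * K t * vector_derivative \<gamma> (at t)) integrable_on {0..1}"
    "\<And>f B. f holomorphic_on \<Omega> \<Longrightarrow> (\<forall>z\<in>\<Omega>. norm (f z) \<le> B) \<Longrightarrow>
        norm (integral {0..1} (\<lambda>t. f (\<gamma> t) * K t * vector_derivative \<gamma> (at t))) \<le> L * B"
proof -
  obtain S where S: "finite S" and dS: "\<And>t. t \<in> {0..1} - S \<Longrightarrow> (\<gamma> has_vector_derivative vector_derivative \<gamma> (at t)) (at t)"
    using vp unfolding valid_path_def piecewise_C1_differentiable_on_def C1_differentiable_on_eq
    by (metis vector_derivative_works)
  have c\<gamma>: "continuous_on {0..1} \<gamma>" using vp valid_path_imp_path path_def by blast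
  obtain R \<Psi> \<Delta> where H: "\<And>t0. t0 \<in> {0..1} \<Longrightarrow> R t0 > 0 \<and> \<Psi> t0 holomorphic_on ball (\<gamma> t0) (R t0) \<and> ball (\<gamma> t0) (R t0) \<subseteq> \<Omega> \<and>
        \<Delta> t0 > 0 \<and> (\<forall>t\<in>{0..1}. dist t t0 < \<Delta> t0 \<longrightarrow> \<gamma> t \<in> ball (\<gamma> t0) (R t0/2) \<and> K t = \<Psi> t0 (\<gamma> t))"
    using loc by metis
  obtain e where e: "e > 0" "\<And>x. x \<in> {0..1} \<Longrightarrow> \<exists>G \<in> (\<lambda>t0. ball t0 (\<Delta> t0)) ` {0..1::real}. ball x e \<subseteq> G"
  proof (rule Heine_Borel_lemma[of "{0..1::real}" "(\<lambda>t0. ball t0 (\<Delta> t0)) ` {0..1}"])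
    show "{0..1::real} \<subseteq> \<Union> ((\<lambda>t0. ball t0 (\<Delta> t0)) ` {0..1})" using H by force
  qed auto
  obtain n where n: "inverse (real (Suc n)) < e" using reals_Archimedean e(1) by blast
  define N where "N = Suc n"
  have N: "N > 0" "1 / real N < e" using n by (auto simp: N_def field_simps)
  define a where "a k = real k / real N" for k
  have "\<forall>k. \<exists>t0. k < N \<longrightarrow> t0 \<in> {0..1} \<and> ball (a k) e \<subseteq> ball t0 (\<Delta> t0)"
  proof
    fix k
    show "\<exists>t0. k < N \<longrightarrow> t0 \<in> {0..1} \<and> ball (a k) e \<subseteq> ball t0 (\<Delta> t0)"
    proof (cases "k < N")
      case True
      then have "a k \<in> {0..1}" using N by (auto simp: a_def field_simps)
      then show ?thesis using e(2)[of "a k"] by auto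
    qed auto
  qed
  then obtain T where T: "\<And>k. k < N \<Longrightarrow> T k \<in> {0..1} \<and> ball (a k) e \<subseteq> ball (T k) (\<Delta> (T k))"
    by metis
  have "\<forall>k. \<exists>M. k < N \<longrightarrow> M > 0 \<and> (\<forall>z \<in> cball (\<gamma> (T k)) (R (T k)/2). norm (\<Psi> (T k) z) \<le> M)"
  proof
    fix k
    show "\<exists>M. k < N \<longrightarrow> M > 0 \<and> (\<forall>z \<in> cball (\<gamma> (T k)) (R (T k)/2). norm (\<Psi> (T k) z) \<le> M)"
    proof (cases "k < N")
      case True
      let ?c = "\<gamma> (T k)" and ?r = "R (T k)"
      have Hk: "?r > 0" "\<Psi> (T k) holomorphic_on ball ?c ?r" using H T True by auto
      have sub: "cball ?c (?r/2) \<subseteq> ball ?c ?r" using Hk(1) by (auto simp: subset_iff)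
      have "continuous_on (cball ?c (?r/2)) (\<Psi> (T k))"
        using Hk(2) holomorphic_on_imp_continuous_on holomorphic_on_subset sub by blast
      then have "bounded (\<Psi> (T k) ` cball ?c (?r/2))"
        by (intro compact_imp_bounded compact_continuous_image) auto
      then show ?thesis using True by (auto simp: bounded_pos)
    qed auto
  qed
  then obtain M where M: "\<And>k. k < N \<Longrightarrow> M k > 0 \<and> (\<forall>z \<in> cball (\<gamma> (T k)) (R (T k)/2). norm (\<Psi> (T k) z) \<le> M k)"
    by metis
  define g where "g f t = f (\<gamma> t) * K t * vector_derivative \<gamma> (at t)" for f :: "complex \<Rightarrow> complex" and t
  define C where "C k = M k * R (T k)" for k
  have piece: "\<exists>I. (g f has_integral I) {a k..a (Suc k)} \<and>
      (\<forall>B. (\<forall>z\<in>\<Omega>. norm (f z) \<le> B) \<longrightarrow> norm I \<le> B * C k)"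
    if f: "f holomorphic_on \<Omega>" and k: "k < N" for f k
  proof -
    define c where "c = \<gamma> (T k)"
    define r where "r = R (T k)"
    define \<psi> where "\<psi> = \<Psi> (T k)"
    define D where "D = ball c (r/2)"
    have Tk: "T k \<in> {0..1}" "ball (a k) e \<subseteq> ball (T k) (\<Delta> (T k))" using T k by auto
    have HT: "r > 0" "\<psi> holomorphic_on ball c r" "ball c r \<subseteq> \<Omega>"
      "\<And>t. t \<in> {0..1} \<Longrightarrow> dist t (T k) < \<Delta> (T k) \<Longrightarrow> \<gamma> t \<in> D \<and> K t = \<psi> (\<gamma> t)"
      using H[OF Tk(1)] by (auto simp: c_def r_def \<psi>_def D_def)
    have ak: "0 \<le> a k" "a k \<le> a (Suc k)" "a (Suc k) \<le> 1" "a (Suc k) - a k = 1 / real N"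
      using k N by (auto simp: a_def field_simps)
    have inpiece: "\<gamma> t \<in> D \<and> K t = \<psi> (\<gamma> t)" if t: "t \<in> {a k..a (Suc k)}" for t
    proof -
      have "t \<in> {0..1}" using t ak by auto
      moreover have "dist t (a k) < e" using t ak N(2) by (auto simp: dist_real_def)
      then have "t \<in> ball (a k) e" by (simp add: dist_commute)
      then have "dist t (T k) < \<Delta> (T k)" using Tk(2) by (auto simp: dist_commute)
      ultimately show ?thesis using HT(4) by blast
    qed
    have DsubB: "D \<subseteq> ball c r" using HT(1) by (auto simp: D_def)
    have hol: "(\<lambda>z. f z * \<psi> z) holomorphic_on D"
      using f HT(2,3) DsubB by (intro holomorphic_intros) (auto intro: holomorphic_on_subset)
    obtain \<Phi> where \<Phi>: "\<And>x. x \<in> D \<Longrightarrow> (\<Phi> has_field_derivative f x * \<psi> x) (at x within D)"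
      using holomorphic_convex_primitive'[OF _ _ hol] by (auto simp: D_def)
    have \<Phi>at: "(\<Phi> has_field_derivative f x * \<psi> x) (at x)" if "x \<in> D" for x
      using \<Phi>[OF that] that at_within_open[of x D] by (simp add: D_def)
    have c\<Phi>: "continuous_on D \<Phi>"
      using \<Phi>at by (meson DERIV_continuous continuous_at_imp_continuous_on)
    have FTC: "((\<lambda>t. vector_derivative \<gamma> (at t) * (f (\<gamma> t) * \<psi> (\<gamma> t))) has_integral
                 ((\<Phi> \<circ> \<gamma>) (a (Suc k)) - (\<Phi> \<circ> \<gamma>) (a k))) {a k..a (Suc k)}"
    proof (rule fundamental_theorem_of_calculus_interior_strong[OF S ak(2)])
      fix t assume t: "t \<in> {a k<..<a (Suc k)} - S"
      then have "t \<in> {0..1} - S" using ak by auto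
      then show "((\<Phi> \<circ> \<gamma>) has_vector_derivative vector_derivative \<gamma> (at t) * (f (\<gamma> t) * \<psi> (\<gamma> t))) (at t)"
        using t by (intro field_vector_diff_chain_at dS \<Phi>at inpiece[THEN conjunct1]) auto
    next
      show "continuous_on {a k..a (Suc k)} (\<Phi> \<circ> \<gamma>)"
        using ak inpiece
        by (intro continuous_on_compose continuous_on_subset[OF c\<gamma>] continuous_on_subset[OF c\<Phi>]) auto
    qed
    have geq: "g f t = vector_derivative \<gamma> (at t) * (f (\<gamma> t) * \<psi> (\<gamma> t))" if "t \<in> {a k..a (Suc k)}" for t
      using inpiece[OF that] by (simp add: g_def)
    show ?thesis
    proof (intro exI conjI allI impI)
      show "(g f has_integral ((\<Phi> \<circ> \<gamma>) (a (Suc k)) - (\<Phi> \<circ> \<gamma>) (a k))) {a k..a (Suc k)}"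
        using FTC by (rule has_integral_eq[rotated]) (simp add: geq)
      fix B assume B: "\<forall>z\<in>\<Omega>. norm (f z) \<le> B"
      have B0: "0 \<le> B" using B HT(1,3) by (meson centre_in_ball norm_ge_zero order_trans subsetD)
      have Mk: "M k > 0" "\<And>z. z \<in> cball c (r/2) \<Longrightarrow> norm (\<psi> z) \<le> M k"
        using M[OF k] by (auto simp: c_def r_def \<psi>_def)
      have bnd: "norm (f z * \<psi> z) \<le> B * M k" if "z \<in> D" for z
      proof -
        have "z \<in> \<Omega>" using that DsubB HT(3) by auto
        then have "norm (f z) \<le> B" using B by auto
        moreover have "norm (\<psi> z) \<le> M k" using Mk(2) that by (auto simp: D_def)
        ultimately show ?thesis by (simp add: norm_mult mult_mono B0)
      qed
      have ga: "\<gamma> (a k) \<in> D" and gb: "\<gamma> (a (Suc k)) \<in> D" using inpiece ak by auto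
      have "norm (\<Phi> (\<gamma> (a (Suc k))) - \<Phi> (\<gamma> (a k))) \<le> (B * M k) * norm (\<gamma> (a (Suc k)) - \<gamma> (a k))"
        by (rule field_differentiable_bound[of D]) (use \<Phi> bnd ga gb in \<open>auto simp: D_def\<close>)
      also have "norm (\<gamma> (a (Suc k)) - \<gamma> (a k)) \<le> r"
      proof -
        have "dist c (\<gamma> (a (Suc k))) < r/2" "dist c (\<gamma> (a k)) < r/2" using ga gb by (auto simp: D_def)
        then show ?thesis using dist_triangle2[of "\<gamma> (a (Suc k))" "\<gamma> (a k)" c]
          by (simp add: dist_norm dist_commute norm_minus_commute)
      qed
      then have "(B * M k) * norm (\<gamma> (a (Suc k)) - \<gamma> (a k)) \<le> (B * M k) * r"
        using B0 Mk(1) by (intro mult_left_mono) auto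
      finally show "norm ((\<Phi> \<circ> \<gamma>) (a (Suc k)) - (\<Phi> \<circ> \<gamma>) (a k)) \<le> B * C k"
        by (simp add: C_def r_def mult_ac)
    qed
  qed
  have accum: "m \<le> N \<Longrightarrow> \<exists>I. (g f has_integral I) {0..a m} \<and>
      (\<forall>B. (\<forall>z\<in>\<Omega>. norm (f z) \<le> B) \<longrightarrow> norm I \<le> B * (\<Sum>k<m. C k))"
    if f: "f holomorphic_on \<Omega>" for f m
  proof (induction m)
    case 0
    then show ?case by (auto simp: a_def)
  next
    case (Suc m)
    then obtain I where I: "(g f has_integral I) {0..a m}"
      "\<forall>B. (\<forall>z\<in>\<Omega>. norm (f z) \<le> B) \<longrightarrow> norm I \<le> B * (\<Sum>k<m. C k)" by auto
    obtain J where J: "(g f has_integral J) {a m..a (Suc m)}"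
      "\<forall>B. (\<forall>z\<in>\<Omega>. norm (f z) \<le> B) \<longrightarrow> norm J \<le> B * C m" using piece[OF f, of m] Suc by auto
    have am: "0 \<le> a m" "a m \<le> a (Suc m)" using N by (auto simp: a_def field_simps)
    show ?case
    proof (intro exI conjI allI impI)
      show "(g f has_integral (I + J)) {0..a (Suc m)}" by (rule has_integral_combine[OF am I(1) J(1)])
      fix B assume "\<forall>z\<in>\<Omega>. norm (f z) \<le> B"
      then have "norm I \<le> B * (\<Sum>k<m. C k)" "norm J \<le> B * C m" using I(2) J(2) by auto
      then show "norm (I + J) \<le> B * (\<Sum>k<Suc m. C k)"
        using norm_triangle_ineq[of I J] by (simp add: distrib_left)
    qed
  qed
  have aN: "a N = 1" using N by (simp add: a_def)
  show ?thesis
  proof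
    fix f assume "f holomorphic_on \<Omega>"
    then show "(\<lambda>t. f (\<gamma> t) * K t * vector_derivative \<gamma> (at t)) integrable_on {0..1}"
      using accum[of f N] aN unfolding g_def by (auto simp: integrable_on_def)
  next
    fix f B assume f: "f holomorphic_on \<Omega>" and B: "\<forall>z\<in>\<Omega>. norm (f z) \<le> B"
    obtain I where I: "(g f has_integral I) {0..1}" "norm I \<le> B * (\<Sum>k<N. C k)"
      using accum[OF f, of N] aN B by auto
    then show "norm (integral {0..1} (\<lambda>t. f (\<gamma> t) * K t * vector_derivative \<gamma> (at t))) \<le> (\<Sum>k<N. C k) * B"
    proof -
      have "integral {0..1} (g f) = I" using I(1) by (rule integral_unique)
      then show ?thesis using I(2) unfolding g_def by (simp add: mult.commute)
    qed
  qed
qed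


lemma branch_local:
  fixes \<gamma> W :: "real \<Rightarrow> complex" and P :: "complex \<Rightarrow> complex"
  assumes c\<gamma>: "continuous_on {0..1} \<gamma>" and cW: "continuous_on {0..1} W"
    and sqW: "\<And>t. t \<in> {0..1} \<Longrightarrow> (W t)^2 = P (\<gamma> t)"
    and hP: "P holomorphic_on \<Omega>" and \<Omega>: "open \<Omega>" and nzP: "\<And>z. z \<in> \<Omega> \<Longrightarrow> P z \<noteq> 0"
    and path: "\<And>t. t \<in> {0..1} \<Longrightarrow> \<gamma> t \<in> \<Omega>" and t0: "t0 \<in> {0..1}"
  shows "\<exists>r>0. \<exists>\<psi>. \<psi> holomorphic_on ball (\<gamma> t0) r \<and> ball (\<gamma> t0) r \<subseteq> \<Omega> \<and>
     (\<forall>z\<in>ball (\<gamma> t0) r. (\<psi> z)^2 = P z \<and> \<psi> z \<noteq> 0) \<and>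
     (\<exists>\<delta>>0. \<forall>t\<in>{0..1}. dist t t0 < \<delta> \<longrightarrow> \<gamma> t \<in> ball (\<gamma> t0) (r/2) \<and> W t = \<psi> (\<gamma> t))"
proof -
  let ?z0 = "\<gamma> t0"
  have P0: "P ?z0 \<noteq> 0" using nzP path t0 by blast
  obtain r where r: "r > 0" "ball ?z0 r \<subseteq> \<Omega>"
    "(\<lambda>z. W t0 * csqrt (P z / P ?z0)) holomorphic_on ball ?z0 r"
    "\<And>z. z \<in> ball ?z0 r \<Longrightarrow> (W t0 * csqrt (P z / P ?z0))^2 = P z \<and> W t0 * csqrt (P z / P ?z0) \<noteq> 0"
    using local_sqrt[OF hP \<Omega> path[OF t0] P0 sqW[OF t0]] by blast
  define \<psi> where "\<psi> = (\<lambda>z. W t0 * csqrt (P z / P ?z0))"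
  obtain \<delta> where \<delta>: "\<delta> > 0" "\<And>t. t \<in> {0..1} \<Longrightarrow> dist t t0 < \<delta> \<Longrightarrow> dist (\<gamma> t) ?z0 < r/2"
    using c\<gamma> t0 r(1) unfolding continuous_on_iff by (metis half_gt_zero)
  define X where "X = {0..1} \<inter> ball t0 \<delta>"
  have Xc: "connected X" unfolding X_def
    by (intro convex_connected convex_Int convex_ball) (simp add: convex_real_interval)
  have inX: "t \<in> X \<Longrightarrow> \<gamma> t \<in> ball ?z0 (r/2)" for t
    using \<delta>(2)[of t] by (auto simp: X_def dist_commute)
  have sub: "ball ?z0 (r/2) \<subseteq> ball ?z0 r" using r(1) by auto
  have eq: "W t = \<psi> (\<gamma> t)" if "t \<in> X" for t
  proof (rule sq_eq_connected[OF Xc, of W "\<lambda>t. \<psi> (\<gamma> t)" t0])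
    show "continuous_on X W" using cW by (rule continuous_on_subset) (auto simp: X_def)
    show "continuous_on X (\<lambda>t. \<psi> (\<gamma> t))"
    proof (rule continuous_on_compose2[of "ball ?z0 r" \<psi> X \<gamma>])
      show "continuous_on (ball ?z0 r) \<psi>" using r(3) holomorphic_on_imp_continuous_on \<psi>_def by blast
      show "continuous_on X \<gamma>" using c\<gamma> by (rule continuous_on_subset) (auto simp: X_def)
      show "\<gamma> ` X \<subseteq> ball ?z0 r" using inX sub by blast
    qed
    fix x assume x: "x \<in> X"
    then have xx: "x \<in> {0..1}" "\<gamma> x \<in> ball ?z0 r" using inX[OF x] sub by (auto simp: X_def)
    show "(W x)^2 = (\<psi> (\<gamma> x))^2" using sqW[OF xx(1)] r(4)[OF xx(2)] by (simp add: \<psi>_def)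
    show "\<psi> (\<gamma> x) \<noteq> 0" using r(4)[OF xx(2)] by (simp add: \<psi>_def)
  next
    show "t0 \<in> X" using t0 \<delta> by (auto simp: X_def)
    show "W t0 = \<psi> (\<gamma> t0)" using P0 by (simp add: \<psi>_def)
  qed (use that in auto)
  show ?thesis
  proof (intro exI conjI)
    show "r > 0" "\<psi> holomorphic_on ball ?z0 r" "ball ?z0 r \<subseteq> \<Omega>" using r by (auto simp: \<psi>_def)
    show "\<forall>z\<in>ball ?z0 r. (\<psi> z)^2 = P z \<and> \<psi> z \<noteq> 0" using r(4) by (simp add: \<psi>_def)
    show "\<delta> > 0" by fact
    show "\<forall>t\<in>{0..1}. dist t t0 < \<delta> \<longrightarrow> \<gamma> t \<in> ball ?z0 (r/2) \<and> W t = \<psi> (\<gamma> t)"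
      using inX eq by (auto simp: X_def dist_commute)
  qed
qed


lemma valid_path_deriv:
  assumes "valid_path \<gamma>"
  obtains S where "finite S" "\<And>t. t \<in> {0..1} - S \<Longrightarrow> (\<gamma> has_vector_derivative vector_derivative \<gamma> (at t)) (at t)"
  using assms unfolding valid_path_def piecewise_C1_differentiable_on_def C1_differentiable_on_eq
  by (metis vector_derivative_works)

lemma sum_zero:
  fixes \<gamma> W :: "real \<Rightarrow> complex" and us :: "'n::finite \<Rightarrow> complex" and n :: int
  assumes vp: "valid_path \<gamma>" and cW: "continuous_on {0..1} W"
    and sq: "\<And>t. t \<in> {0..1} \<Longrightarrow> (W t)^2 = (\<Prod>k\<in>UNIV. \<gamma> t - us k)"
    and av: "\<And>t k. t \<in> {0..1} \<Longrightarrow> \<gamma> t \<noteq> us k" and W10: "W 1 = W 0" and n: "n \<noteq> 0"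
    and int: "\<And>i. (\<lambda>t. W t powi n * vector_derivative \<gamma> (at t) / (\<gamma> t - us i)) integrable_on {0..1}"
  shows "(\<Sum>i\<in>UNIV. integral {0..1} (\<lambda>t. W t powi n * vector_derivative \<gamma> (at t) / (\<gamma> t - us i))) = 0"
proof -
  obtain S where S: "finite S" and dS: "\<And>t. t \<in> {0..1} - S \<Longrightarrow> (\<gamma> has_vector_derivative vector_derivative \<gamma> (at t)) (at t)"
    using valid_path_deriv[OF vp] by blast
  have c\<gamma>: "continuous_on {0..1} \<gamma>" using vp valid_path_imp_path path_def by blast
  define \<Omega> where "\<Omega> = - range us"
  define P where "P z = (\<Prod>k\<in>UNIV. z - us k)" for z
  have \<Omega>o: "open \<Omega>" unfolding \<Omega>_def by (intro open_Compl finite_imp_closed) auto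
  have hP: "P holomorphic_on \<Omega>" unfolding P_def by (intro holomorphic_intros)
  have nzP: "P z \<noteq> 0" if "z \<in> \<Omega>" for z using that by (auto simp: P_def \<Omega>_def)
  have path: "\<gamma> t \<in> \<Omega>" if "t \<in> {0..1}" for t using av[OF that] by (auto simp: \<Omega>_def)
  have Wnz: "W t \<noteq> 0" if "t \<in> {0..1}" for t
    using sq[OF that] nzP[OF path[OF that]] by (auto simp: P_def)
  define Sf where "Sf t = (\<Sum>i\<in>UNIV. W t powi n * vector_derivative \<gamma> (at t) / (\<gamma> t - us i))" for t
  define F where "F t = (2 / of_int n) * W t powi n" for t
  have deriv: "(F has_vector_derivative Sf t) (at t)" if t: "t \<in> {0<..<1} - S" for t
  proof -
    have t01: "t \<in> {0..1}" using t by auto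
    obtain r \<psi> \<delta> where r: "r > 0" "\<psi> holomorphic_on ball (\<gamma> t) r" "ball (\<gamma> t) r \<subseteq> \<Omega>"
      "\<forall>z\<in>ball (\<gamma> t) r. (\<psi> z)^2 = P z \<and> \<psi> z \<noteq> 0" "\<delta> > 0"
      "\<forall>s\<in>{0..1}. dist s t < \<delta> \<longrightarrow> \<gamma> s \<in> ball (\<gamma> t) (r/2) \<and> W s = \<psi> (\<gamma> s)"
      using branch_local[OF c\<gamma> cW sq[unfolded P_def[symmetric]] hP \<Omega>o nzP path t01] by metis
    have ct: "\<gamma> t \<in> ball (\<gamma> t) r" using r(1) by simp
    obtain d where d: "(\<psi> has_field_derivative d) (at (\<gamma> t))"
      using holomorphic_on_imp_differentiable_at[OF r(2) open_ball ct] field_differentiable_def by blast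
    have w: "W t = \<psi> (\<gamma> t)" using r(5,6) t01 by auto
    define w where "w = W t"
    have wnz: "w \<noteq> 0" using Wnz[OF t01] by (simp add: w_def)
    define \<Sigma> where "\<Sigma> = (\<Sum>k\<in>UNIV. 1 / (\<gamma> t - us k))"
    have dP: "(P has_field_derivative (P (\<gamma> t) * \<Sigma>)) (at (\<gamma> t))"
      unfolding P_def \<Sigma>_def
      by (rule has_field_derivative_prod'[of UNIV "\<lambda>k z. z - us k" "\<gamma> t" "\<lambda>_. 1", simplified])
         (use av[OF t01] in \<open>auto intro!: derivative_eq_intros\<close>)
    have d2: "((\<lambda>z. (\<psi> z)^2) has_field_derivative (of_nat 2 * (d * \<psi> (\<gamma> t) ^ (2 - Suc 0)))) (at (\<gamma> t))"
      by (rule DERIV_power[OF d])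
    have "(P has_field_derivative (of_nat 2 * (d * \<psi> (\<gamma> t) ^ (2 - Suc 0)))) (at (\<gamma> t))"
      by (rule has_field_derivative_transform_within_open[OF d2 open_ball ct]) (use r(4) in auto)
    then have deq: "2 * d * w = w^2 * \<Sigma>"
      using DERIV_unique[OF dP] sq[OF t01] w by (simp add: P_def w_def mult_ac)
    have dK: "((\<lambda>z. (2 / of_int n) * \<psi> z powi n) has_field_derivative
        (2 / of_int n) * (of_int n * \<psi> (\<gamma> t) powi (n - 1) * d)) (at (\<gamma> t))"
      by (intro DERIV_cmult DERIV_power_int d) (use r(4) ct in auto)
    have chain: "((\<lambda>s. (2 / of_int n) * \<psi> (\<gamma> s) powi n) has_vector_derivative
        vector_derivative \<gamma> (at t) * ((2 / of_int n) * (of_int n * \<psi> (\<gamma> t) powi (n - 1) * d))) (at t)"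
      using field_vector_diff_chain_at[OF dS dK] t by (simp add: o_def)
    have val: "vector_derivative \<gamma> (at t) * ((2 / of_int n) * (of_int n * \<psi> (\<gamma> t) powi (n - 1) * d)) = Sf t"
    proof -
      have "vector_derivative \<gamma> (at t) * ((2 / of_int n) * (of_int n * \<psi> (\<gamma> t) powi (n - 1) * d))
          = vector_derivative \<gamma> (at t) * (w powi (n - 1) * (2 * d))"
        using n by (simp add: w w_def field_simps)
      also have "2 * d = w * \<Sigma>" using deq wnz by (simp add: power2_eq_square field_simps)
      also have "w powi (n - 1) * (w * \<Sigma>) = (w powi (n - 1) * w) * \<Sigma>" by (simp add: mult_ac)
      also have "w powi (n - 1) * w = w powi n" using power_int_add_1[of w "n - 1"] wnz by simp
      also have "vector_derivative \<gamma> (at t) * (w powi n * \<Sigma>) = Sf t"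
        by (simp add: Sf_def \<Sigma>_def w_def sum_distrib_left mult.commute)
      finally show ?thesis .
    qed
    show ?thesis
    proof (rule has_vector_derivative_transform_within_open[OF chain[unfolded val], of "ball t \<delta> \<inter> {0<..<1}"])
      show "open (ball t \<delta> \<inter> {0<..<1})" by auto
      show "t \<in> ball t \<delta> \<inter> {0<..<1}" using t r(5) by auto
      fix s assume "s \<in> ball t \<delta> \<inter> {0<..<1}"
      then show "2 / of_int n * \<psi> (\<gamma> s) powi n = F s" using r(6) by (auto simp: F_def dist_commute)
    qed
  qed
  have cF: "continuous_on {0..1} F" unfolding F_def
    by (intro continuous_intros cW) (use Wnz in auto)
  have "(Sf has_integral (F 1 - F 0)) {0..1}"
    by (rule fundamental_theorem_of_calculus_interior_strong[OF S _ deriv cF]) auto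
  then have "integral {0..1} Sf = 0" using W10 by (simp add: F_def integral_unique)
  moreover have "integral {0..1} Sf = (\<Sum>i\<in>UNIV. integral {0..1} (\<lambda>t. W t powi n * vector_derivative \<gamma> (at t) / (\<gamma> t - us i)))"
    unfolding Sf_def by (rule integral_sum) (use int in auto)
  ultimately show ?thesis by simp
qed


lemma vec_upd_nth: "vec_upd u j w $ k = (if k = j then w else u $ k)"
  by (simp add: vec_upd_def)

lemma vec_upd_same: "vec_upd u j (u $ j) = u"
  by (simp add: vec_eq_iff vec_upd_nth)

lemma dist_vec_upd: "dist (vec_upd u j w) u \<le> dist w (u $ j)"
proof -
  have "dist (vec_upd u j w) u = L2_set (\<lambda>k. dist (vec_upd u j w $ k) (u $ k)) UNIV"
    by (simp add: dist_vec_def)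
  also have "\<dots> \<le> (\<Sum>k\<in>UNIV. dist (vec_upd u j w $ k) (u $ k))"
    by (rule L2_set_le_sum) simp
  also have "\<dots> = (\<Sum>k\<in>UNIV. if k = j then dist w (u $ j) else 0)"
    by (rule sum.cong) (auto simp: vec_upd_nth)
  also have "\<dots> = dist w (u $ j)" by simp
  finally show ?thesis .
qed

lemma branch_poly_split: "branch_poly u z = (z - u $ j) * (\<Prod>k\<in>UNIV - {j}. z - u $ k)"
  unfolding branch_poly_def by (simp add: prod.remove)

lemma branch_poly_upd: "branch_poly (vec_upd u j w) z = (z - w) * (\<Prod>k\<in>UNIV - {j}. z - u $ k)"
  unfolding branch_poly_split[of _ _ j] by (simp add: vec_upd_nth)

lemma continuous_on_vec_upd: "continuous_on S (\<lambda>w. vec_upd u j w)"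
  unfolding vec_upd_def
proof (intro continuous_on_vec_lambda)
  fix k show "continuous_on S (\<lambda>x. if k = j then x else u $ k)"
    by (cases "k = j") (auto intro: continuous_intros)
qed

lemma continuous_on_vec_upd': "continuous_on S f \<Longrightarrow> continuous_on S (\<lambda>x. vec_upd u j (f x))"
  using continuous_on_compose2[OF continuous_on_vec_upd] by blast

lemma deriv_approx:
  fixes q :: "complex \<Rightarrow> complex"
  assumes "(q has_field_derivative D) (at 0)" "\<epsilon> > 0"
  shows "\<exists>\<delta>>0. \<forall>x. norm x < \<delta> \<longrightarrow> norm (q x - q 0 - x * D) \<le> \<epsilon> * norm x"
proof -
  have "((\<lambda>y. (q y - q 0) / (y - 0)) \<longlongrightarrow> D) (at 0)"
    using assms(1) by (simp add: has_field_derivative_iff)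
  from this[unfolded tendsto_iff, rule_format, OF assms(2)]
  have "eventually (\<lambda>y. dist ((q y - q 0) / (y - 0)) D < \<epsilon>) (at 0)" .
  then obtain \<delta> where \<delta>: "\<delta> > 0" "\<And>y. y \<noteq> 0 \<Longrightarrow> dist y 0 < \<delta> \<Longrightarrow> dist ((q y - q 0) / (y - 0)) D < \<epsilon>"
    unfolding eventually_at by auto
  show ?thesis
  proof (intro exI conjI allI impI)
    fix x :: complex assume x: "norm x < \<delta>"
    show "norm (q x - q 0 - x * D) \<le> \<epsilon> * norm x"
    proof (cases "x = 0")
      case False
      have "q x - q 0 - x * D = x * ((q x - q 0) / x - D)" using False by (simp add: field_simps)
      then have "norm (q x - q 0 - x * D) = norm x * norm ((q x - q 0) / x - D)" by (simp add: norm_mult)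
      also have "\<dots> \<le> norm x * \<epsilon>" using \<delta>(2)[OF False] x False by (intro mult_left_mono) (auto simp: dist_norm)
      finally show ?thesis by (simp add: mult.commute)
    qed simp
  qed (use \<delta> in auto)
qed

definition qf :: "int \<Rightarrow> complex \<Rightarrow> complex" where
  "qf n x = csqrt (1 - x) powi n"

lemma Re_one_minus_pos: "norm (x::complex) < 1 \<Longrightarrow> 0 < Re (1 - x)"
  using abs_Re_le_cmod[of x] by auto

lemma qf_holo: "qf n holomorphic_on ball 0 1"
proof -
  have "(\<lambda>x. csqrt (1 - x)) holomorphic_on ball 0 1"
  proof -
    have "(csqrt \<circ> (\<lambda>x. 1 - x)) holomorphic_on ball 0 1"
      by (rule holomorphic_on_compose_gen[OF _ holomorphic_on_csqrt])
         (use Re_pos_not_nonpos Re_one_minus_pos in \<open>auto intro!: holomorphic_intros\<close>)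
    then show ?thesis by (simp add: o_def)
  qed
  moreover have "\<forall>x\<in>ball 0 1. csqrt (1 - x) \<noteq> 0"
    using Re_one_minus_pos by fastforce
  ultimately show ?thesis unfolding qf_def by (intro holomorphic_on_power_int) auto
qed

lemma qf_0: "qf n 0 = 1" by (simp add: qf_def)

lemma qf_deriv: "(qf n has_field_derivative (- (of_int n / 2))) (at 0)"
proof -
  have "((\<lambda>x. csqrt (1 - x)) has_field_derivative (- 1 / (2 * csqrt (1 - 0)))) (at 0)"
    by (rule has_field_derivative_csqrt') (auto intro!: derivative_eq_intros)
  then have "((\<lambda>x. csqrt (1 - x) powi n) has_field_derivative (of_int n * csqrt (1 - 0) powi (n - 1) * (- 1 / (2 * csqrt (1 - 0))))) (at 0)"
    by (rule DERIV_power_int) simp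
  then show ?thesis by (simp add: qf_def[abs_def])
qed


lemma fz_aux: "(A::complex) / d - B / d - e * (- m / (s * d)) = (A - B - (e / s) * (- m)) / d"
  by (cases "d = 0"; cases "s = 0") (simp_all add: field_simps)

lemma aux3: "(E::real) \<noteq> 0 \<Longrightarrow> A * (\<epsilon> * E / B) / E = \<epsilon> * (A / B)"
  by (simp add: field_simps)

lemma pf_aux: "(c::complex) - a \<noteq> 0 \<Longrightarrow> D \<noteq> 0 \<Longrightarrow> x / 2 / (c - a) * ((a - c) / D) = - (x / 2) / D"
  by (simp add: field_simps)

theorem theorem1:
  fixes \<gamma> :: "real \<Rightarrow> complex"
    and V :: "complex ^ 'n \<Rightarrow> real \<Rightarrow> complex"
    and U :: "(complex ^ 'n) set"
    and n :: int and g :: nat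
  assumes "CARD('n) = 2 * g + 1" and "g \<ge> 1" and "n \<noteq> 0"
    and "open U"
    and "\<forall>u\<in>U. \<forall>j k. j \<noteq> k \<longrightarrow> u $ j \<noteq> u $ k"
    and "valid_path \<gamma>" and "pathfinish \<gamma> = pathstart \<gamma>"
    and "\<forall>u\<in>U. \<forall>t\<in>{0..1}. \<forall>k. \<gamma> t \<noteq> u $ k"
    and "continuous_on (U \<times> {0..1}) (\<lambda>(u, t). V u t)"
    and "\<forall>u\<in>U. \<forall>t\<in>{0..1}. (V u t)\<^sup>2 = branch_poly u (\<gamma> t)"
    and "\<forall>u\<in>U. V u 1 = V u 0"
  shows "\<forall>u\<in>U.
     (\<forall>i j. i \<noteq> j \<longrightarrow>
        ((\<lambda>w. period_integral \<gamma> V n i (vec_upd u j w)) has_field_derivative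
          (of_int n / 2 * (period_integral \<gamma> V n i u - period_integral \<gamma> V n j u) / (u $ j - u $ i)))
        (at (u $ j)))
     \<and> (\<Sum>i\<in>UNIV. period_integral \<gamma> V n i u) = 0"
proof
  fix u assume uU: "u \<in> U"
  note n = assms(3) and Uo = assms(4) and vp = assms(6)
  have distinct: "\<And>j k. j \<noteq> k \<Longrightarrow> u $ j \<noteq> u $ k" using assms(5) uU by blast
  have av: "\<And>t k. t \<in> {0..1} \<Longrightarrow> \<gamma> t \<noteq> u $ k" using assms(8) uU by blast
  have cVj: "continuous_on (U \<times> {0..1}) (\<lambda>p. V (fst p) (snd p))"
    using assms(9) by (simp add: case_prod_beta)
  have sqall: "\<And>v t. v \<in> U \<Longrightarrow> t \<in> {0..1} \<Longrightarrow> (V v t)^2 = branch_poly v (\<gamma> t)" using assms(10) by blast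
  have c\<gamma>: "continuous_on {0..1} \<gamma>" using vp valid_path_imp_path path_def by blast
  obtain e0 where e0: "e0 > 0" "\<And>t k. t \<in> {0..1} \<Longrightarrow> 2 * e0 \<le> norm (\<gamma> t - u $ k)"
  proof -
    let ?A = "path_image \<gamma>" and ?B = "range (\<lambda>k. u $ k)"
    have cA: "compact ?A" using compact_path_image valid_path_imp_path vp by blast
    have cB: "closed ?B" by (intro finite_imp_closed) simp
    have disj: "?A \<inter> ?B = {}" using av by (auto simp: path_image_def)
    have ne: "?A \<noteq> {}" "?B \<noteq> {}" by (auto simp: path_image_def)
    have sd: "setdist ?A ?B > 0"
      using setdist_eq_0_compact_closed[OF cA cB] disj ne setdist_pos_le[of ?A ?B] by linarith
    show ?thesis
    proof (rule that[of "setdist ?A ?B / 2"])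
      show "setdist ?A ?B / 2 > 0" using sd by simp
      fix t :: real and k :: 'n assume "t \<in> {0..1}"
      then have "setdist ?A ?B \<le> dist (\<gamma> t) (u $ k)" by (intro setdist_le_dist) (auto simp: path_image_def)
      then show "2 * (setdist ?A ?B / 2) \<le> norm (\<gamma> t - u $ k)" by (simp add: dist_norm)
    qed
  qed
  define \<Omega> where "\<Omega> = (\<Inter>k. - cball (u $ k) e0)"
  have \<Omega>o: "open \<Omega>" unfolding \<Omega>_def by (intro open_INT) auto
  have in\<Omega>: "z \<in> \<Omega> \<longleftrightarrow> (\<forall>k. e0 < norm (z - u $ k))" for z
    by (auto simp: \<Omega>_def dist_norm norm_minus_commute not_le)
  have path: "\<gamma> t \<in> \<Omega>" if "t \<in> {0..1}" for t
    unfolding in\<Omega> proof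
    fix k show "e0 < norm (\<gamma> t - u $ k)" using e0(2)[OF that, of k] e0(1) by linarith
  qed
  have nzk: "z - u $ k \<noteq> 0" if "z \<in> \<Omega>" for z k
  proof -
    have "e0 < norm (z - u $ k)" using that in\<Omega> by blast
    then show ?thesis using e0(1) by auto
  qed
  have cV: "continuous_on {0..1} (V u)"
  proof -
    have "continuous_on {0..1} (\<lambda>t::real. (u, t))" by (intro continuous_intros)
    moreover have "(\<lambda>t::real. (u, t)) ` {0..1} \<subseteq> U \<times> {0..1}" using uU by auto
    ultimately show ?thesis using continuous_on_compose2[OF cVj, of "{0..1}" "\<lambda>t. (u, t)"] by simp
  qed
  have sqV: "\<And>t. t \<in> {0..1} \<Longrightarrow> (V u t)^2 = branch_poly u (\<gamma> t)" using sqall uU by blast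
  have hP: "branch_poly u holomorphic_on \<Omega>" unfolding branch_poly_def[abs_def] by (intro holomorphic_intros)
  have nzP: "branch_poly u z \<noteq> 0" if "z \<in> \<Omega>" for z using nzk[OF that] by (simp add: branch_poly_def)
  have Vnz: "V u t \<noteq> 0" if "t \<in> {0..1}" for t using sqV[OF that] nzP[OF path[OF that]] by auto
  define K where "K t = V u t powi n" for t
  obtain L where Lint: "\<And>f. f holomorphic_on \<Omega> \<Longrightarrow> (\<lambda>t. f (\<gamma> t) * K t * vector_derivative \<gamma> (at t)) integrable_on {0..1}"
    and Lbnd: "\<And>f B. f holomorphic_on \<Omega> \<Longrightarrow> (\<forall>z\<in>\<Omega>. norm (f z) \<le> B) \<Longrightarrow>
        norm (integral {0..1} (\<lambda>t. f (\<gamma> t) * K t * vector_derivative \<gamma> (at t))) \<le> L * B"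
  proof (rule path_bound[OF vp \<Omega>o, of K])
    fix t0 :: real assume t0: "t0 \<in> {0..1}"
    obtain r \<psi> \<delta> where r: "r > 0" "\<psi> holomorphic_on ball (\<gamma> t0) r" "ball (\<gamma> t0) r \<subseteq> \<Omega>"
      "\<forall>z\<in>ball (\<gamma> t0) r. (\<psi> z)^2 = branch_poly u z \<and> \<psi> z \<noteq> 0" "\<delta> > 0"
      "\<forall>t\<in>{0..1}. dist t t0 < \<delta> \<longrightarrow> \<gamma> t \<in> ball (\<gamma> t0) (r/2) \<and> V u t = \<psi> (\<gamma> t)"
      using branch_local[OF c\<gamma> cV sqV hP \<Omega>o nzP path t0] by metis
    show "\<exists>r>0. \<exists>\<psi>. \<psi> holomorphic_on ball (\<gamma> t0) r \<and> ball (\<gamma> t0) r \<subseteq> \<Omega> \<and>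
        (\<exists>\<delta>>0. \<forall>t\<in>{0..1}. dist t t0 < \<delta> \<longrightarrow> \<gamma> t \<in> ball (\<gamma> t0) (r/2) \<and> K t = \<psi> (\<gamma> t))"
    proof (intro exI conjI)
      show "(\<lambda>z. \<psi> z powi n) holomorphic_on ball (\<gamma> t0) r"
        using r(2,4) by (intro holomorphic_on_power_int) auto
      show "\<forall>t\<in>{0..1}. dist t t0 < \<delta> \<longrightarrow> \<gamma> t \<in> ball (\<gamma> t0) (r/2) \<and> K t = \<psi> (\<gamma> t) powi n"
        using r(6) by (simp add: K_def)
    qed (use r in auto)
  qed blast
  have hi: "(\<lambda>z. 1 / (z - u $ i)) holomorphic_on \<Omega>" for i
    using nzk by (intro holomorphic_intros) auto
  have aeq: "(\<lambda>t. V u t powi n * vector_derivative \<gamma> (at t) / (\<gamma> t - u $ i)) =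
      (\<lambda>t. (\<lambda>z. 1 / (z - u $ i)) (\<gamma> t) * K t * vector_derivative \<gamma> (at t))" for i
    by (simp add: K_def)
  have aint: "period_integral \<gamma> V n i u = integral {0..1} (\<lambda>t. (\<lambda>z. 1 / (z - u $ i)) (\<gamma> t) * K t * vector_derivative \<gamma> (at t))"
    "(\<lambda>t. (\<lambda>z. 1 / (z - u $ i)) (\<gamma> t) * K t * vector_derivative \<gamma> (at t)) integrable_on {0..1}" for i
    using Lint[OF hi] by (auto simp: period_integral_def aeq)
  show "(\<forall>i j. i \<noteq> j \<longrightarrow>
        ((\<lambda>w. period_integral \<gamma> V n i (vec_upd u j w)) has_field_derivative
          (of_int n / 2 * (period_integral \<gamma> V n i u - period_integral \<gamma> V n j u) / (u $ j - u $ i)))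
        (at (u $ j)))
     \<and> (\<Sum>i\<in>UNIV. period_integral \<gamma> V n i u) = 0"
  proof (intro conjI allI impI)
    show "(\<Sum>i\<in>UNIV. period_integral \<gamma> V n i u) = 0"
      unfolding period_integral_def
    proof (rule sum_zero[OF vp cV _ av _ n])
      show "\<And>t. t \<in> {0..1} \<Longrightarrow> (V u t)^2 = (\<Prod>k\<in>UNIV. \<gamma> t - u $ k)"
        using sqV by (simp add: branch_poly_def)
      show "V u 1 = V u 0" using assms(11) uU by blast
      show "\<And>i. (\<lambda>t. V u t powi n * vector_derivative \<gamma> (at t) / (\<gamma> t - u $ i)) integrable_on {0..1}"
        using aint(2) by (simp add: aeq)
    qed
  next
    fix i j :: 'n assume ij: "i \<noteq> j"
    show "((\<lambda>w. period_integral \<gamma> V n i (vec_upd u j w)) has_field_derivative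
          (of_int n / 2 * (period_integral \<gamma> V n i u - period_integral \<gamma> V n j u) / (u $ j - u $ i)))
        (at (u $ j))"
    proof -
    define c where "c = u $ j"
    have ci: "c \<noteq> u $ i" using distinct ij by (simp add: c_def)
    obtain \<rho> where \<rho>: "\<rho> > 0" "ball u \<rho> \<subseteq> U" using Uo uU open_contains_ball by blast
    define \<rho>' where "\<rho>' = min \<rho> (e0/2)"
    have \<rho>'0: "\<rho>' > 0" using \<rho> e0 by (simp add: \<rho>'_def)
    have inU: "vec_upd u j w \<in> U" if "w \<in> ball c \<rho>'" for w
    proof -
      have "dist (vec_upd u j w) u < \<rho>"
        using dist_vec_upd[of u j w] that by (auto simp: c_def \<rho>'_def dist_commute)
      then show ?thesis using \<rho>(2) by (auto simp: dist_commute)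
    qed
    have zc: "e0 < norm (z - c)" if "z \<in> \<Omega>" for z using that in\<Omega> by (simp add: c_def)
    have xbound: "norm ((w - c) / (z - c)) \<le> norm (w - c) / e0" if "z \<in> \<Omega>" for z w
    proof -
      have "norm ((w - c) / (z - c)) = norm (w - c) / norm (z - c)" by (simp add: norm_divide)
      also have "\<dots> \<le> norm (w - c) / e0" proof (rule divide_left_mono)
        show "0 < norm (z - c) * e0" using zc[OF that] e0(1) by (meson mult_pos_pos order.strict_trans)
      qed (use zc[OF that] in auto)
      finally show ?thesis .
    qed
    have xhalf: "norm ((w - c) / (z - c)) < 1/2" if "z \<in> \<Omega>" "w \<in> ball c \<rho>'" for z w
    proof -
      have "norm (w - c) < e0 / 2" using that(2) by (auto simp: \<rho>'_def dist_norm norm_minus_commute)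
      then have "norm (w - c) / e0 < 1/2" using e0(1) by (simp add: field_simps)
      then show ?thesis using xbound[OF that(1), of w] by linarith
    qed
    have Rep: "V (vec_upd u j w) t = csqrt (1 - (w - c) / (\<gamma> t - c)) * V u t"
      if w: "w \<in> ball c \<rho>'" and t: "t \<in> {0..1}" for w t
    proof -
      define X where "X = ball c \<rho>' \<times> {0..1::real}"
      have Xc: "connected X" unfolding X_def
        by (intro connected_Times convex_connected) (auto simp: convex_real_interval)
      have inX: "fst x \<in> ball c \<rho>'" "snd x \<in> {0..1}" if "x \<in> X" for x using that by (auto simp: X_def)
      have ReP: "0 < Re (1 - (fst x - c) / (\<gamma> (snd x) - c))" if "x \<in> X" for x
        using xhalf[OF path[OF inX(2)[OF that]] inX(1)[OF that]] Re_one_minus_pos by fastforce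
      have cg: "continuous_on X (\<lambda>x. \<gamma> (snd x))"
        by (rule continuous_on_compose2[OF c\<gamma> continuous_on_snd]) (auto simp: X_def)
      have cv: "continuous_on X (\<lambda>x. V u (snd x))"
        by (rule continuous_on_compose2[OF cV continuous_on_snd]) (auto simp: X_def)
      have gnc: "\<gamma> (snd x) - c \<noteq> 0" if "x \<in> X" for x using nzk[OF path[OF inX(2)[OF that]]] by (simp add: c_def)
      define a where "a x = V (vec_upd u j (fst x)) (snd x)" for x
      define b where "b x = csqrt (1 - (fst x - c) / (\<gamma> (snd x) - c)) * V u (snd x)" for x
      have ca: "continuous_on X a" unfolding a_def
      proof (rule continuous_on_compose2[OF cVj, of X "\<lambda>x. (vec_upd u j (fst x), snd x)", simplified])
        show "continuous_on X (\<lambda>x. (vec_upd u j (fst x), snd x))"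
          by (intro continuous_on_Pair continuous_on_vec_upd' continuous_on_fst continuous_on_snd continuous_on_id)
        show "(\<lambda>x. (vec_upd u j (fst x), snd x)) ` X \<subseteq> U \<times> {0..1}"
          using inU inX by auto
      qed
      have "continuous_on X (\<lambda>x. csqrt (1 - (fst x - c) / (\<gamma> (snd x) - c)))"
      proof (rule continuous_on_compose2[OF continuous_on_csqrt])
        show "continuous_on X (\<lambda>x. 1 - (fst x - c) / (\<gamma> (snd x) - c))"
          using gnc by (intro continuous_intros cg) auto
        show "(\<lambda>x. 1 - (fst x - c) / (\<gamma> (snd x) - c)) ` X \<subseteq> - \<real>\<^sub>\<le>\<^sub>0"
          using ReP Re_pos_not_nonpos by blast
      qed
      then have cb: "continuous_on X b" unfolding b_def by (intro continuous_on_mult cv)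
      have sqab: "(a x)^2 = (b x)^2" and nzb: "b x \<noteq> 0" if x: "x \<in> X" for x
      proof -
        obtain w' t' where x': "x = (w', t')" by fastforce
        have w': "w' \<in> ball c \<rho>'" and t': "t' \<in> {0..1}" using inX[OF x] x' by auto
        have gc: "\<gamma> t' - c \<noteq> 0" using gnc[OF x] x' by simp
        have "(V (vec_upd u j w') t')^2 = branch_poly (vec_upd u j w') (\<gamma> t')" using sqall[OF inU[OF w'] t'] .
        also have "\<dots> = (\<gamma> t' - w') * (\<Prod>k\<in>UNIV - {j}. \<gamma> t' - u $ k)" by (rule branch_poly_upd)
        also have "\<dots> = (1 - (w' - c) / (\<gamma> t' - c)) * ((\<gamma> t' - c) * (\<Prod>k\<in>UNIV - {j}. \<gamma> t' - u $ k))"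
          using gc by (simp add: field_simps)
        also have "(\<gamma> t' - c) * (\<Prod>k\<in>UNIV - {j}. \<gamma> t' - u $ k) = (V u t')^2"
          using sqV[OF t'] branch_poly_split[of u "\<gamma> t'" j] by (simp add: c_def)
        also have "(1 - (w' - c) / (\<gamma> t' - c)) * (V u t')^2 = (csqrt (1 - (w' - c) / (\<gamma> t' - c)) * V u t')^2"
          by (simp add: power_mult_distrib)
        finally show "(a x)^2 = (b x)^2" using x' by (simp add: a_def b_def)
        have "1 - (w' - c) / (\<gamma> t' - c) \<noteq> 0" using ReP[OF x] x' by auto
        then show "b x \<noteq> 0" using Vnz[OF t'] x' by (simp add: b_def)
      qed
      have x0: "(c, 0) \<in> X" using \<rho>'0 by (simp add: X_def)
      have ab0: "a (c, 0) = b (c, 0)" by (simp add: a_def b_def c_def vec_upd_same)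
      have "(w, t) \<in> X" using w t by (simp add: X_def)
      from sq_eq_connected[OF Xc ca cb sqab nzb x0 ab0 this]
      show ?thesis by (simp add: a_def b_def)
    qed
    define h where "h w z = qf n ((w - c) / (z - c)) / (z - u $ i)" for w z
    have hw: "h w holomorphic_on \<Omega>" if w: "w \<in> ball c \<rho>'" for w
    proof -
      have "(qf n \<circ> (\<lambda>z. (w - c) / (z - c))) holomorphic_on \<Omega>"
      proof (rule holomorphic_on_compose_gen[OF _ qf_holo])
        show "(\<lambda>z. (w - c) / (z - c)) holomorphic_on \<Omega>"
          using zc e0(1) by (intro holomorphic_intros) force
        show "(\<lambda>z. (w - c) / (z - c)) ` \<Omega> \<subseteq> ball 0 1" using xhalf[OF _ w] by fastforce
      qed
      then show ?thesis unfolding h_def using nzk by (intro holomorphic_intros) (auto simp: o_def)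
    qed
    have Frep: "period_integral \<gamma> V n i (vec_upd u j w) = integral {0..1} (\<lambda>t. h w (\<gamma> t) * K t * vector_derivative \<gamma> (at t))"
      if w: "w \<in> ball c \<rho>'" for w
      unfolding period_integral_def
    proof (rule integral_cong)
      fix t :: real assume t: "t \<in> {0..1}"
      have "V (vec_upd u j w) t powi n = qf n ((w - c) / (\<gamma> t - c)) * K t"
        using Rep[OF w t] by (simp add: qf_def K_def power_int_mult_distrib)
      then show "V (vec_upd u j w) t powi n * vector_derivative \<gamma> (at t) / (\<gamma> t - vec_upd u j w $ i) =
          h w (\<gamma> t) * K t * vector_derivative \<gamma> (at t)"
        using ij by (simp add: h_def vec_upd_nth)
    qed
    define Dz where "Dz z = - (of_int n / 2) / ((z - c) * (z - u $ i))" for z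
    define ai where "ai = period_integral \<gamma> V n i u"
    define aj where "aj = period_integral \<gamma> V n j u"
    define Dval where "Dval = of_int n / 2 * (ai - aj) / (c - u $ i)"
    have hD: "Dz holomorphic_on \<Omega>" unfolding Dz_def
      using nzk zc e0(1) by (intro holomorphic_intros) force
    have Dint: "((\<lambda>t. Dz (\<gamma> t) * K t * vector_derivative \<gamma> (at t)) has_integral Dval) {0..1}"
    proof -
      have gi: "((\<lambda>t. (\<lambda>z. 1 / (z - u $ i)) (\<gamma> t) * K t * vector_derivative \<gamma> (at t)) has_integral ai) {0..1}"
        using aint[of i] integrable_integral by (simp add: ai_def)
      have gj: "((\<lambda>t. (\<lambda>z. 1 / (z - u $ j)) (\<gamma> t) * K t * vector_derivative \<gamma> (at t)) has_integral aj) {0..1}"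
        using aint[of j] integrable_integral by (simp add: aj_def)
      have "((\<lambda>t. (of_int n / 2 / (c - u $ i)) * ((\<lambda>z. 1 / (z - u $ i)) (\<gamma> t) * K t * vector_derivative \<gamma> (at t)
           - (\<lambda>z. 1 / (z - u $ j)) (\<gamma> t) * K t * vector_derivative \<gamma> (at t))) has_integral
           ((of_int n / 2 / (c - u $ i)) * (ai - aj))) {0..1}"
        by (intro has_integral_mult_right has_integral_diff gi gj)
      then have "((\<lambda>t. Dz (\<gamma> t) * K t * vector_derivative \<gamma> (at t)) has_integral ((of_int n / 2 / (c - u $ i)) * (ai - aj))) {0..1}"
      proof (rule has_integral_eq[rotated])
        fix t :: real assume t: "t \<in> {0..1}"
        have a1: "\<gamma> t - u $ i \<noteq> 0" and a2: "\<gamma> t - c \<noteq> 0" using nzk[OF path[OF t]] by (auto simp: c_def)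
        have a3: "c - u $ i \<noteq> 0" using ci by simp
        show "of_int n / 2 / (c - u $ i) * (1 / (\<gamma> t - u $ i) * K t * vector_derivative \<gamma> (at t) -
            1 / (\<gamma> t - u $ j) * K t * vector_derivative \<gamma> (at t)) = Dz (\<gamma> t) * K t * vector_derivative \<gamma> (at t)"
        proof -
          define z where "z = \<gamma> t"
          define q where "q = K t * vector_derivative \<gamma> (at t)"
          have pf: "1 / (z - u $ i) - 1 / (z - c) = (u $ i - c) / ((z - c) * (z - u $ i))"
            using a1 a2 by (simp add: z_def field_simps)
          have "of_int n / 2 / (c - u $ i) * (1 / (z - u $ i) * q - 1 / (z - c) * q)
              = of_int n / 2 / (c - u $ i) * ((1 / (z - u $ i) - 1 / (z - c)) * q)" by (simp add: algebra_simps)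
          also have "\<dots> = of_int n / 2 / (c - u $ i) * ((u $ i - c) / ((z - c) * (z - u $ i))) * q"
            by (simp add: pf)
          also have "of_int n / 2 / (c - u $ i) * ((u $ i - c) / ((z - c) * (z - u $ i))) = Dz z"
            unfolding Dz_def by (rule pf_aux) (use a1 a2 a3 in \<open>auto simp: z_def\<close>)
          finally show ?thesis by (simp add: z_def q_def c_def mult.assoc)
        qed
      qed
      then show ?thesis by (simp add: Dval_def)
    qed
    define Fp where "Fp w = period_integral \<gamma> V n i (vec_upd u j w)" for w
    have cb: "c \<in> ball c \<rho>'" using \<rho>'0 by simp
    have main: "(Fp has_field_derivative Dval) (at c)"
      unfolding has_field_derivative_iff tendsto_iff
    proof (intro allI impI)
      fix \<epsilon> :: real assume \<epsilon>: "\<epsilon> > 0"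
      define \<epsilon>1 where "\<epsilon>1 = \<epsilon> * e0^2 / (\<bar>L\<bar> + 1)"
      have \<epsilon>1: "\<epsilon>1 > 0" using \<epsilon> e0(1) by (simp add: \<epsilon>1_def)
      obtain \<delta>1 where \<delta>1: "\<delta>1 > 0" and approx: "\<And>x. norm x < \<delta>1 \<Longrightarrow>
          norm (qf n x - qf n 0 - x * (- (of_int n / 2))) \<le> \<epsilon>1 * norm x"
        using deriv_approx[OF qf_deriv \<epsilon>1] by blast
      define d where "d = min \<rho>' (\<delta>1 * e0)"
      show "eventually (\<lambda>y. dist ((Fp y - Fp c) / (y - c)) Dval < \<epsilon>) (at c)"
        unfolding eventually_at
      proof (intro exI conjI ballI impI)
        show "d > 0" using \<rho>'0 \<delta>1 e0(1) by (simp add: d_def)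
        fix y assume "y \<in> UNIV" and yc: "y \<noteq> c \<and> dist y c < d"
        have yb: "y \<in> ball c \<rho>'" using yc by (auto simp: d_def dist_commute)
        have yd: "norm (y - c) < \<delta>1 * e0" using yc by (auto simp: d_def dist_norm)
        define f where "f z = h y z - h c z - (y - c) * Dz z" for z
        have hf: "f holomorphic_on \<Omega>" unfolding f_def
          using hw[OF yb] hw[OF cb] hD by (intro holomorphic_intros)
        have Iy: "((\<lambda>t. h y (\<gamma> t) * K t * vector_derivative \<gamma> (at t)) has_integral Fp y) {0..1}"
          using integrable_integral[OF Lint[OF hw[OF yb]]] Frep[OF yb] by (simp add: Fp_def)
        have Ic: "((\<lambda>t. h c (\<gamma> t) * K t * vector_derivative \<gamma> (at t)) has_integral Fp c) {0..1}"
          using integrable_integral[OF Lint[OF hw[OF cb]]] Frep[OF cb] by (simp add: Fp_def)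
        have If: "((\<lambda>t. f (\<gamma> t) * K t * vector_derivative \<gamma> (at t)) has_integral (Fp y - Fp c - (y - c) * Dval)) {0..1}"
          using has_integral_diff[OF has_integral_diff[OF Iy Ic] has_integral_mult_right[OF Dint, of "y - c"]]
          by (rule has_integral_eq[rotated]) (simp add: f_def algebra_simps)
        have fb: "\<forall>z\<in>\<Omega>. norm (f z) \<le> \<epsilon>1 * norm (y - c) / e0^2"
        proof
          fix z assume z: "z \<in> \<Omega>"
          define x where "x = (y - c) / (z - c)"
          have nx: "norm x \<le> norm (y - c) / e0" using xbound[OF z] by (simp add: x_def)
          have "norm (y - c) / e0 < \<delta>1" using yd e0(1) by (simp add: pos_divide_less_eq)
          then have nx2: "norm x < \<delta>1" using nx by linarith
          have a1: "z - u $ i \<noteq> 0" using nzk[OF z] by simp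
          have a2: "z - c \<noteq> 0" using zc[OF z] e0(1) by auto
          have fz: "f z = (qf n x - qf n 0 - x * (- (of_int n / 2))) / (z - u $ i)"
            unfolding f_def h_def Dz_def x_def by (simp only: fz_aux[symmetric] diff_self div_0)
          have "norm (f z) = norm (qf n x - qf n 0 - x * (- (of_int n / 2))) / norm (z - u $ i)"
            by (simp add: fz norm_divide)
          also have "\<dots> \<le> (\<epsilon>1 * norm x) / e0"
          proof (rule frac_le)
            show "0 \<le> \<epsilon>1 * norm x" using \<epsilon>1 by simp
            show "norm (qf n x - qf n 0 - x * (- (of_int n / 2))) \<le> \<epsilon>1 * norm x" by (rule approx[OF nx2])
            show "0 < e0" by (rule e0(1))
            show "e0 \<le> norm (z - u $ i)" using z in\<Omega> by (simp add: less_imp_le)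
          qed
          also have "\<dots> \<le> (\<epsilon>1 * (norm (y - c) / e0)) / e0"
            using nx \<epsilon>1 e0(1) by (intro divide_right_mono mult_left_mono) auto
          also have "\<dots> = \<epsilon>1 * norm (y - c) / e0^2" by (simp add: power2_eq_square)
          finally show "norm (f z) \<le> \<epsilon>1 * norm (y - c) / e0^2" .
        qed
        have nb: "norm (Fp y - Fp c - (y - c) * Dval) \<le> L * (\<epsilon>1 * norm (y - c) / e0^2)"
          using Lbnd[OF hf fb] integral_unique[OF If] by simp
        have ny: "norm (y - c) > 0" using yc by simp
        have "dist ((Fp y - Fp c) / (y - c)) Dval = norm (Fp y - Fp c - (y - c) * Dval) / norm (y - c)"
        proof -
          have "(Fp y - Fp c) / (y - c) - Dval = (Fp y - Fp c - (y - c) * Dval) / (y - c)"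
            using yc by (simp add: field_simps)
          then show ?thesis by (simp add: dist_norm norm_divide)
        qed
        also have "\<dots> \<le> L * (\<epsilon>1 * norm (y - c) / e0^2) / norm (y - c)"
          using nb ny by (intro divide_right_mono) auto
        also have "\<dots> = L * \<epsilon>1 / e0^2" using ny by (simp add: field_simps)
        also have "\<dots> \<le> \<bar>L\<bar> * \<epsilon>1 / e0^2" using \<epsilon>1 e0(1)
          by (intro divide_right_mono mult_right_mono) auto
        also have "\<dots> = \<epsilon> * (\<bar>L\<bar> / (\<bar>L\<bar> + 1))" unfolding \<epsilon>1_def by (rule aux3) (use e0(1) in simp)
        also have "\<dots> < \<epsilon>" using \<epsilon> by (simp add: field_simps)
        finally show "dist ((Fp y - Fp c) / (y - c)) Dval < \<epsilon>" .
      qed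
    qed
    show ?thesis using main by (simp add: Fp_def[abs_def] Dval_def ai_def aj_def c_def)
    qed
  qed
qed

end
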